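(* Assume condition (B). Then the limit function $F(\lambda)=\lim_{n\to\infty}F_n(\lambda)$, $\lambda\ge0$, has the representation $$F(\lambda)=d\lambda+\int_0^\infty(1-e^{-\lambda u})\,\Lambda_2(du),$$ where $d\ge0$ and $\Lambda_2$ is a $\sigma$-finite measure on $(0,\infty)$ with $\int_0^\infty(1\wedge u)\,\Lambda_2(du)<\infty$.
   Context: For each $n\ge1$, let $\{\eta_n(k):k\ge1\}$ be i.i.d. $\mathbb N$-valued random variables with generating function $h_n(s)=E[s^{\eta_n(1)}]$. Let $(b_n)$ be positive numbers with $b_n\to\infty$. For $0\le\lambda\le b_n$ set $F_n(\lambda)=n[1-h_n(1-\lambda/b_n)]$. Condition (B): the sequence $(F_n)$ converges pointwise to a continuous function as $n\to\infty$. *)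

theory Defs
  imports "HOL-Probability.Probability"
begin

definition gen_fun :: "nat pmf \<Rightarrow> real \<Rightarrow> real" where
  "gen_fun p s = measure_pmf.expectation p (\<lambda>k. s ^ k)"

text \<open>F_n(lambda) = n [1 - h_n(1 - lambda/b_n)], where p n is the law of eta_n(1).\<close>
definition Fn :: "(nat \<Rightarrow> nat pmf) \<Rightarrow> (nat \<Rightarrow> real) \<Rightarrow> nat \<Rightarrow> real \<Rightarrow> real" where
  "Fn p b n l = real n * (1 - gen_fun (p n) (1 - l / b n))"

end

theory Submission imports Defs "HOL-Real_Asymp.Real_Asymp" begin

lemma integrable_pow_pmf:
  fixes s :: real assumes "\<bar>s\<bar> \<le> 1"
  shows "integrable (measure_pmf q) (\<lambda>k. s ^ k)"
proof (rule measure_pmf.integrable_const_bound[where B=1])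
  show "AE x in measure_pmf q. norm (s ^ x) \<le> 1"
    using assms by (auto simp: power_abs intro!: power_le_one)
qed simp

lemma gen_fun_one: "gen_fun q 1 = 1"
  by (simp add: gen_fun_def)

lemma Fn_zero: "Fn p b n 0 = 0"
  by (simp add: Fn_def gen_fun_one)

lemma gen_fun_mono:
  fixes s t :: real assumes "0 \<le> s" "s \<le> t" "t \<le> 1"
  shows "gen_fun q s \<le> gen_fun q t"
  unfolding gen_fun_def
  by (rule integral_mono) (use assms in \<open>auto intro!: integrable_pow_pmf power_mono\<close>)

lemma Fn_mono:
  assumes "b n > 0" "0 \<le> x" "x \<le> y" "y \<le> b n"
  shows "Fn p b n x \<le> Fn p b n y"
proof -
  have "gen_fun (p n) (1 - y / b n) \<le> gen_fun (p n) (1 - x / b n)"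
    using assms by (intro gen_fun_mono) (auto simp: field_simps)
  then show ?thesis unfolding Fn_def by (intro mult_left_mono) auto
qed

definition Gn :: "(nat \<Rightarrow> nat pmf) \<Rightarrow> (nat \<Rightarrow> real) \<Rightarrow> nat \<Rightarrow> real \<Rightarrow> real" where
  "Gn p b n \<mu> = real n * measure_pmf.expectation (p n) (\<lambda>k. 1 - exp (- \<mu> * real k / b n))"

lemma Gn_Fn:
  assumes "b n > 0" "\<mu> \<ge> 0"
  shows "Gn p b n \<mu> = Fn p b n (b n * (1 - exp (- \<mu> / b n)))"
proof -
  have e: "1 - b n * (1 - exp (- \<mu> / b n)) / b n = exp (- \<mu> / b n)" using assms by simp
  have "\<bar>exp (- \<mu> / b n)\<bar> \<le> 1" using assms by simp
  then have int: "integrable (measure_pmf (p n)) (\<lambda>k. exp (- \<mu> / b n) ^ k)"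
    by (rule integrable_pow_pmf)
  have eq: "exp (- \<mu> / b n) ^ k = exp (- \<mu> * real k / b n)" for k
    by (simp add: exp_of_nat_mult[symmetric] mult.commute)
  have "measure_pmf.expectation (p n) (\<lambda>k. 1 - exp (- \<mu> * real k / b n))
       = 1 - measure_pmf.expectation (p n) (\<lambda>k. exp (- \<mu> / b n) ^ k)"
  proof -
    have "(\<lambda>k. 1 - exp (- \<mu> * real k / b n)) = (\<lambda>k. 1 - exp (- \<mu> / b n) ^ k)"
      by (intro ext) (subst eq, rule refl)
    then show ?thesis using int by (simp add: Bochner_Integration.integral_diff)
  qed
  then show ?thesis by (simp add: Gn_def Fn_def gen_fun_def e)
qed


lemma lam_tendsto:
  fixes b :: "nat \<Rightarrow> real" and \<mu> :: real
  assumes b_lim: "filterlim b at_top sequentially" and "\<mu> > 0"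
  shows "(\<lambda>n. b n * (1 - exp (- \<mu> / b n))) \<longlonglongrightarrow> \<mu>"
proof -
  have "((\<lambda>x. x*(1-exp(-\<mu>/x))) \<longlongrightarrow> \<mu>) at_top"
    using assms(2) by real_asymp
  from filterlim_compose[OF this b_lim] show ?thesis by simp
qed

lemma Gn_zero: "Gn p b n 0 = 0"
  by (simp add: Gn_def)

lemma Gn_tendsto:
  fixes p :: "nat \<Rightarrow> nat pmf" and b :: "nat \<Rightarrow> real" and F :: "real \<Rightarrow> real"
  assumes b_pos: "\<And>n. b n > 0"
    and b_lim: "filterlim b at_top sequentially"
    and B_conv: "\<And>l. l \<ge> 0 \<Longrightarrow> (\<lambda>n. Fn p b n l) \<longlonglongrightarrow> F l"
    and B_cont: "continuous_on {0..} F"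
    and mu: "\<mu> \<ge> 0"
  shows "(\<lambda>n. Gn p b n \<mu>) \<longlonglongrightarrow> F \<mu>"
proof (cases "\<mu> = 0")
  case True
  have "(\<lambda>n. Fn p b n 0) \<longlonglongrightarrow> F 0" using B_conv by simp
  then have "F 0 = 0" by (simp add: Fn_zero LIMSEQ_const_iff)
  then show ?thesis using True by (simp add: Gn_zero)
next
  case False
  with mu have mpos: "\<mu> > 0" by simp
  define lam where "lam n = b n * (1 - exp (- \<mu> / b n))" for n
  have lam_lim: "lam \<longlonglongrightarrow> \<mu>" unfolding lam_def by (rule lam_tendsto[OF b_lim mpos])
  have lam_nonneg: "0 \<le> lam n" for n
    using b_pos[of n] mpos by (auto simp: lam_def intro!: mult_nonneg_nonneg)
  have lam_le: "lam n \<le> \<mu>" for n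
  proof -
    have "1 - \<mu> / b n \<le> exp (- \<mu> / b n)" using exp_ge_add_one_self[of "- \<mu> / b n"] by simp
    then have "1 - exp (- \<mu> / b n) \<le> \<mu> / b n" by simp
    then have "b n * (1 - exp (- \<mu> / b n)) \<le> b n * (\<mu> / b n)"
      using b_pos[of n] by (intro mult_left_mono) auto
    then show ?thesis using b_pos[of n] by (simp add: lam_def)
  qed
  have G_eq: "Gn p b n \<mu> = Fn p b n (lam n)" for n
    unfolding lam_def using b_pos mu by (rule Gn_Fn)
  have ev_b: "eventually (\<lambda>n. \<mu> \<le> b n) sequentially"
    using b_lim by (simp add: filterlim_at_top)
  show ?thesis
  proof (rule order_tendstoI)
    fix a assume a: "F \<mu> < a"
    have "eventually (\<lambda>n. Fn p b n \<mu> < a) sequentially"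
      using order_tendstoD(2)[OF B_conv[OF mu] a] .
    then show "eventually (\<lambda>n. Gn p b n \<mu> < a) sequentially"
      using ev_b
    proof eventually_elim
      case (elim n)
      have "Fn p b n (lam n) \<le> Fn p b n \<mu>"
        using elim b_pos[of n] lam_nonneg[of n] lam_le[of n] by (intro Fn_mono) auto
      then show ?case using elim by (simp add: G_eq)
    qed
  next
    fix a assume a: "a < F \<mu>"
    have "(F \<longlongrightarrow> F \<mu>) (at \<mu> within {0..})"
      using B_cont mu by (simp add: continuous_on_def)
    from order_tendstoD(1)[OF this a]
    obtain d where d: "d > 0" "\<And>x. x \<in> {0..} \<Longrightarrow> x \<noteq> \<mu> \<Longrightarrow> dist x \<mu> < d \<Longrightarrow> a < F x"
      unfolding eventually_at by blast
    define m' where "m' = max 0 (\<mu> - d / 2)"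
    have m'0: "m' \<ge> 0" and m'l: "m' < \<mu>" using d mpos by (auto simp: m'_def)
    have "a < F m'"
      using d(2)[of m'] d(1) m'0 m'l by (auto simp: m'_def dist_real_def)
    then have ev1: "eventually (\<lambda>n. a < Fn p b n m') sequentially"
      using order_tendstoD(1)[OF B_conv[OF m'0]] by blast
    have ev2: "eventually (\<lambda>n. m' < lam n) sequentially"
      using order_tendstoD(1)[OF lam_lim m'l] .
    show "eventually (\<lambda>n. a < Gn p b n \<mu>) sequentially"
      using ev1 ev2 ev_b
    proof eventually_elim
      case (elim n)
      have "Fn p b n m' \<le> Fn p b n (lam n)"
        using elim b_pos[of n] m'0 lam_le[of n] by (intro Fn_mono) auto
      then show ?case using elim by (simp add: G_eq)
    qed
  qed
qed


definition K :: "real \<Rightarrow> real \<Rightarrow> real" where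
  "K \<mu> t = (if t \<le> 0 then \<mu> else if 1 \<le> t then 1 else (1 - (1 - t) powr \<mu>) / t)"

lemma K_mult: "0 \<le> t \<Longrightarrow> t < 1 \<Longrightarrow> t * K \<mu> t = 1 - (1 - t) powr \<mu>"
  by (auto simp: K_def)

lemma K_isCont:
  assumes mu: "\<mu> > 0"
  shows "isCont (K \<mu>) x"
proof -
  have mid: "isCont (K \<mu>) x" if "0 < x" "x < 1" for x
  proof -
    have "eventually (\<lambda>y. y \<in> {0<..<1}) (nhds x)"
      using that by (intro eventually_nhds_in_open) auto
    then have "eventually (\<lambda>y. K \<mu> y = (1 - (1 - y) powr \<mu>) / y) (nhds x)"
      by eventually_elim (auto simp: K_def)
    moreover have "isCont (\<lambda>y. (1 - (1 - y) powr \<mu>) / y) x"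
      using that by (intro continuous_intros) auto
    ultimately show ?thesis using isCont_cong[of "K \<mu>" "\<lambda>y. (1 - (1 - y) powr \<mu>) / y" x] by simp
  qed
  have lo: "isCont (K \<mu>) x" if "x < 0" for x
  proof -
    have "eventually (\<lambda>y. y \<in> {..<0}) (nhds x)"
      using that by (intro eventually_nhds_in_open) auto
    then have "eventually (\<lambda>y. K \<mu> y = \<mu>) (nhds x)"
      by eventually_elim (auto simp: K_def)
    then show ?thesis using isCont_cong[of "K \<mu>" "\<lambda>_. \<mu>" x] by simp
  qed
  have hi: "isCont (K \<mu>) x" if "x > 1" for x
  proof -
    have "eventually (\<lambda>y. y \<in> {1<..}) (nhds x)"
      using that by (intro eventually_nhds_in_open) auto
    then have "eventually (\<lambda>y. K \<mu> y = 1) (nhds x)"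
      by eventually_elim (auto simp: K_def)
    then show ?thesis using isCont_cong[of "K \<mu>" "\<lambda>_. 1" x] by simp
  qed
  have zero: "isCont (K \<mu>) 0"
    unfolding continuous_at_split
  proof
    have "eventually (\<lambda>y. K \<mu> y = \<mu>) (at_left (0::real))"
      by (auto simp: K_def eventually_at_left_field intro!: exI[of _ "-1"])
    then show "continuous (at_left 0) (K \<mu>)"
      unfolding continuous_within by (subst tendsto_cong) (auto simp: K_def)
  next
    have "((\<lambda>y. 1 - y) has_real_derivative -1) (at 0)"
      by (auto intro!: derivative_eq_intros)
    from DERIV_powr[OF this _ DERIV_const]
    have "((\<lambda>y. (1 - y) powr \<mu>) has_real_derivative - \<mu>) (at 0)" by simp
    then have "((\<lambda>h. ((1 - (0 + h)) powr \<mu> - (1 - 0) powr \<mu>) / h) \<longlongrightarrow> - \<mu>) (at 0)"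
      unfolding DERIV_def .
    then have "((\<lambda>h. - (((1 - h) powr \<mu> - 1) / h)) \<longlongrightarrow> - (- \<mu>)) (at 0)"
      by (intro tendsto_minus) simp
    moreover have "(\<lambda>h. - (((1 - h) powr \<mu> - 1) / h)) = (\<lambda>h. (1 - (1 - h) powr \<mu>) / h)"
      by (intro ext) (simp add: minus_divide_left)
    ultimately have "((\<lambda>h. (1 - (1 - h) powr \<mu>) / h) \<longlongrightarrow> \<mu>) (at 0)"
      by simp
    then have 1: "((\<lambda>h. (1 - (1 - h) powr \<mu>) / h) \<longlongrightarrow> \<mu>) (at_right 0)"
      by (rule tendsto_mono[rotated]) (simp add: at_within_le_at)
    have "eventually (\<lambda>y. K \<mu> y = (1 - (1 - y) powr \<mu>) / y) (at_right (0::real))"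
      by (auto simp: K_def eventually_at_right_field intro!: exI[of _ "1"])
    then show "continuous (at_right 0) (K \<mu>)"
      unfolding continuous_within using 1 by (subst tendsto_cong) (auto simp: K_def)
  qed
  have one: "isCont (K \<mu>) 1"
    unfolding continuous_at_split
  proof
    have "eventually (\<lambda>y. K \<mu> y = 1) (at_right (1::real))"
      by (auto simp: K_def eventually_at_right_field intro!: exI[of _ "2"])
    then show "continuous (at_right 1) (K \<mu>)"
      unfolding continuous_within by (subst tendsto_cong) (auto simp: K_def)
  next
    have "((\<lambda>y. 1 - y) \<longlongrightarrow> 1 - 1) (at_left (1::real))"
      by (intro tendsto_intros)
    then have "((\<lambda>y. (1 - y) powr \<mu>) \<longlongrightarrow> 0 powr \<mu>) (at_left (1::real))"
      using mu by (intro tendsto_powr2) (auto simp: eventually_at_left_field intro!: exI[of _ 0])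
    then have 1: "((\<lambda>y. (1 - (1 - y) powr \<mu>) / y) \<longlongrightarrow> (1 - 0) / 1) (at_left (1::real))"
      by (intro tendsto_intros) auto
    have "eventually (\<lambda>y. K \<mu> y = (1 - (1 - y) powr \<mu>) / y) (at_left (1::real))"
      by (auto simp: K_def eventually_at_left_field intro!: exI[of _ "0"])
    then show "continuous (at_left 1) (K \<mu>)"
      unfolding continuous_within using 1 by (subst tendsto_cong) (auto simp: K_def)
  qed
  show ?thesis
    using mid lo hi zero one by (cases "x < 0"; cases "x = 0"; cases "x < 1"; cases "x = 1") auto
qed

lemma K_bounded:
  assumes mu: "\<mu> > 0"
  obtains B where "\<And>t. norm (K \<mu> t) \<le> B"
proof -
  have "continuous_on {0..1} (K \<mu>)"
    using K_isCont[OF mu] by (intro continuous_at_imp_continuous_on) auto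
  then have "compact (K \<mu> ` {0..1})" by (intro compact_continuous_image) auto
  then obtain B where B: "\<And>y. y \<in> K \<mu> ` {0..1} \<Longrightarrow> norm y \<le> B"
    using compact_imp_bounded bounded_iff by metis
  have "norm (K \<mu> t) \<le> B" for t
  proof -
    have "K \<mu> t = K \<mu> (min 1 (max 0 t))" by (auto simp: K_def)
    then show ?thesis using B[of "K \<mu> t"] by auto
  qed
  then show ?thesis using that by blast
qed


definition Tk :: "real \<Rightarrow> nat \<Rightarrow> real" where
  "Tk c k = 1 - exp (- real k / c)"

definition Pm :: "(nat \<Rightarrow> nat pmf) \<Rightarrow> (nat \<Rightarrow> real) \<Rightarrow> nat \<Rightarrow> real measure" where
  "Pm p b n = (if Gn p b n 1 > 0
     then density (distr (measure_pmf (p n)) borel (Tk (b n))) (\<lambda>t. ennreal (real n * t / Gn p b n 1))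
     else return borel 0)"

lemma Tk_bounds: "c > 0 \<Longrightarrow> 0 \<le> Tk c k \<and> Tk c k < 1"
  by (auto simp: Tk_def)

lemma integrable_Tk: assumes "c > 0" shows "integrable (measure_pmf q) (Tk c)"
proof -
  have "\<And>k. 0 \<le> Tk c k \<and> Tk c k < 1" using Tk_bounds[OF assms] by blast
  then show ?thesis
    by (intro measure_pmf.integrable_const_bound[where B=1]) (auto intro!: AE_I2 simp: abs_le_iff less_imp_le)
qed

lemma Gn_one: "Gn p b n 1 = real n * measure_pmf.expectation (p n) (Tk (b n))"
  by (simp add: Gn_def Tk_def[abs_def])

lemma Gn_nonneg: "b n > 0 \<Longrightarrow> \<mu> \<ge> 0 \<Longrightarrow> Gn p b n \<mu> \<ge> 0"
  unfolding Gn_def by (intro mult_nonneg_nonneg integral_nonneg_AE) (auto simp: field_simps)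

lemma Pm_distr:
  assumes "b n > 0"
  shows "real_distribution (Pm p b n)"
proof (cases "Gn p b n 1 > 0")
  case False
  then show ?thesis by (simp add: Pm_def real_distribution_def real_distribution_axioms_def prob_space_return)
next
  case True
  let ?m = "Gn p b n 1"
  let ?Q = "distr (measure_pmf (p n)) borel (Tk (b n))"
  have "emeasure (density ?Q (\<lambda>t. ennreal (real n * t / ?m))) UNIV
      = (\<integral>\<^sup>+ t. ennreal (real n * t / ?m) \<partial>?Q)"
    by (subst emeasure_density) auto
  also have "\<dots> = (\<integral>\<^sup>+ k. ennreal (real n * Tk (b n) k / ?m) \<partial>measure_pmf (p n))"
    by (subst nn_integral_distr) auto
  also have "\<dots> = ennreal (\<integral> k. real n * Tk (b n) k / ?m \<partial>measure_pmf (p n))"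
    using True Tk_bounds[OF assms]
    by (intro nn_integral_eq_integral) (auto intro!: integrable_divide integrable_mult_right integrable_Tk assms)
  also have "(\<integral> k. real n * Tk (b n) k / ?m \<partial>measure_pmf (p n)) = real n * measure_pmf.expectation (p n) (Tk (b n)) / ?m"
    by (simp add: integral_divide_zero integral_mult_right_zero)
  also have "\<dots> = 1"
    using True by (simp add: Gn_one[symmetric])
  finally show ?thesis
    using True by (auto simp: Pm_def real_distribution_def real_distribution_axioms_def intro!: prob_spaceI)
qed

lemma Pm_support:
  assumes "b n > 0"
  shows "measure (Pm p b n) {-1<..1} = 1"
proof -
  interpret real_distribution "Pm p b n" using Pm_distr[where b=b and n=n and p=p, OF assms] .
  have "AE x in Pm p b n. x \<in> {-1<..1}"
  proof (cases "Gn p b n 1 > 0")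
    case False
    have "AE x in return borel (0::real). x \<in> {-1<..1}"
      by (subst AE_return) auto
    then show ?thesis unfolding Pm_def using False by simp
  next
    case True
    then show ?thesis
      unfolding Pm_def using True Tk_bounds[OF assms]
      by (simp only: if_True) (subst AE_density, simp, subst AE_distr_iff, auto simp: less_le_trans[of "-1" 0] less_imp_le intro!: AE_I2)
  qed
  then show ?thesis by (subst AE_in_set_eq_1[symmetric]) auto
qed

lemma tight_Pm:
  assumes "\<And>n. b n > 0"
  shows "tight (Pm p b)"
proof -
  have meas: "real_distribution (Pm p b n)" "measure (Pm p b n) {-1<..1} = 1" for n
    using Pm_distr[where b=b and n=n and p=p] Pm_support[where b=b and n=n and p=p] assms by auto
  then show ?thesis unfolding tight_def
  proof (intro conjI allI impI)
    fix e :: real assume "e > 0"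
    then show "\<exists>a c. a < c \<and> (\<forall>n. 1 - e < measure (Pm p b n) {a<..c})"
      using meas by (intro exI[of _ "-1"] exI[of _ 1]) simp
  qed (use meas in auto)
qed


lemma K_meas[measurable]: "K \<mu> \<in> borel_measurable borel"
  unfolding K_def[abs_def] by measurable

lemma Tk_powr: "c > 0 \<Longrightarrow> (1 - Tk c k) powr \<mu> = exp (- \<mu> * real k / c)"
  by (simp add: Tk_def powr_def)

lemma Gn_eq_int:
  assumes bpos: "b n > 0" and mu: "\<mu> \<ge> 0"
  shows "Gn p b n \<mu> = Gn p b n 1 * (\<integral> t. K \<mu> t \<partial>Pm p b n)"
proof (cases "Gn p b n 1 > 0")
  case True
  let ?m = "Gn p b n 1"
  let ?Q = "distr (measure_pmf (p n)) borel (Tk (b n))"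
  have "(\<integral> t. K \<mu> t \<partial>Pm p b n) = (\<integral> t. K \<mu> t \<partial>density ?Q (\<lambda>t. ennreal (real n * t / ?m)))"
    using True by (simp add: Pm_def)
  also have "\<dots> = (\<integral> t. (real n * t / ?m) * K \<mu> t \<partial>?Q)"
    using True Tk_bounds[OF bpos]
    by (subst integral_density) (auto simp: AE_distr_iff intro!: AE_I2)
  also have "\<dots> = (\<integral> k. (real n * Tk (b n) k / ?m) * K \<mu> (Tk (b n) k) \<partial>measure_pmf (p n))"
    by (subst integral_distr) auto
  also have "\<dots> = (\<integral> k. (real n / ?m) * (1 - exp (- \<mu> * real k / b n)) \<partial>measure_pmf (p n))"
  proof (rule Bochner_Integration.integral_cong[OF refl])
    fix k
    have "Tk (b n) k * K \<mu> (Tk (b n) k) = 1 - exp (- \<mu> * real k / b n)"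
      using Tk_bounds[OF bpos, of k] by (simp add: K_mult Tk_powr[OF bpos])
    then show "(real n * Tk (b n) k / ?m) * K \<mu> (Tk (b n) k) = (real n / ?m) * (1 - exp (- \<mu> * real k / b n))"
      by (metis (no_types, lifting) mult.assoc times_divide_eq_left times_divide_eq_right)
  qed
  also have "\<dots> = (real n / ?m) * measure_pmf.expectation (p n) (\<lambda>k. 1 - exp (- \<mu> * real k / b n))"
    by (rule integral_mult_right_zero)
  finally show ?thesis using True by (simp add: Gn_def[of p b n \<mu>])
next
  case False
  then have m0: "Gn p b n 1 = 0" using Gn_nonneg[where b=b and n=n and p=p and \<mu>=1] bpos by simp
  have "Gn p b n \<mu> = 0"
  proof (cases "n = 0")
    case True then show ?thesis by (simp add: Gn_def)
  next
    case False
    then have "measure_pmf.expectation (p n) (Tk (b n)) = 0" using m0 by (simp add: Gn_one)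
    then have "AE k in measure_pmf (p n). Tk (b n) k = 0"
      using Tk_bounds[OF bpos] integrable_Tk[OF bpos]
      by (subst (asm) integral_nonneg_eq_0_iff_AE) (auto intro!: AE_I2)
    then have "AE k in measure_pmf (p n). 1 - exp (- \<mu> * real k / b n) = 0"
      by eventually_elim (use bpos in \<open>auto simp: Tk_def\<close>)
    then show ?thesis by (simp add: Gn_def integral_eq_zero_AE)
  qed
  then show ?thesis using m0 by simp
qed


lemma K_split: "K \<mu> t = \<mu> * indicator {..0} t + indicator {0<..<1} t * K \<mu> t + indicator {1..} t"
  by (auto simp: K_def indicator_def)

lemma K_le1:
  assumes "0 < \<mu>" "\<mu> \<le> 1" "0 < t" "t < 1"
  shows "\<bar>K \<mu> t\<bar> \<le> 1"
proof -
  have "(1 - t) powr 1 \<le> (1 - t) powr \<mu>" using assms by (intro powr_mono') auto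
  then have a: "1 - t \<le> (1 - t) powr \<mu>" using assms by simp
  have "(1 - t) powr \<mu> \<le> (1 - t) powr 0" using assms by (intro powr_mono') auto
  then have b: "(1 - t) powr \<mu> \<le> 1" using assms by simp
  have "K \<mu> t = (1 - (1 - t) powr \<mu>) / t" using assms by (simp add: K_def)
  moreover have "0 \<le> (1 - (1 - t) powr \<mu>) / t" using b assms by simp
  moreover have "(1 - (1 - t) powr \<mu>) / t \<le> 1" using a assms by (simp add: divide_le_eq)
  ultimately show ?thesis by simp
qed


lemma rep:
  fixes p :: "nat \<Rightarrow> nat pmf" and b :: "nat \<Rightarrow> real" and F :: "real \<Rightarrow> real"
  assumes b_pos: "\<And>n. b n > 0"
    and b_lim: "filterlim b at_top sequentially"
    and B_conv: "\<And>l. l \<ge> 0 \<Longrightarrow> (\<lambda>n. Fn p b n l) \<longlonglongrightarrow> F l"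
    and B_cont: "continuous_on {0..} F"
  obtains M where "real_distribution M" "\<And>\<mu>. \<mu> > 0 \<Longrightarrow> F \<mu> = F 1 * (\<integral> t. K \<mu> t \<partial>M)"
proof -
  have GT: "(\<lambda>n. Gn p b n \<mu>) \<longlonglongrightarrow> F \<mu>" if "\<mu> \<ge> 0" for \<mu>
    using Gn_tendsto[OF b_pos b_lim B_conv B_cont that] .
  obtain r M where r: "strict_mono r" and M: "real_distribution M"
    and wc: "weak_conv_m (Pm p b \<circ> id \<circ> r) M"
    using tight_imp_convergent_subsubsequence[OF tight_Pm[where b=b and p=p, OF b_pos] strict_mono_id] by blast
  have wc': "weak_conv_m (Pm p b \<circ> r) M" using wc by simp
  have "F \<mu> = F 1 * (\<integral> t. K \<mu> t \<partial>M)" if mu: "\<mu> > 0" for \<mu>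
  proof -
    obtain B where B: "\<And>t. norm (K \<mu> t) \<le> B" using K_bounded[OF mu] by blast
    have rd: "real_distribution ((Pm p b \<circ> r) j)" for j
      using Pm_distr[where b=b and p=p and n="r j", OF b_pos] by (simp add: o_def)
    have 1: "(\<lambda>j. \<integral> t. K \<mu> t \<partial>(Pm p b \<circ> r) j) \<longlonglongrightarrow> (\<integral> t. K \<mu> t \<partial>M)"
      by (rule weak_conv_imp_integral_bdd_continuous_conv[OF rd M wc' K_isCont[OF mu] B])
    have 2: "(\<lambda>j. Gn p b (r j) 1 * (\<integral> t. K \<mu> t \<partial>(Pm p b \<circ> r) j)) \<longlonglongrightarrow> F 1 * (\<integral> t. K \<mu> t \<partial>M)"
      using LIMSEQ_subseq_LIMSEQ[OF GT[of 1] r] 1 by (intro tendsto_mult) (auto simp: o_def)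
    have "(\<lambda>j. Gn p b (r j) \<mu>) \<longlonglongrightarrow> F \<mu>"
      using LIMSEQ_subseq_LIMSEQ[OF GT[of \<mu>] r] mu by (simp add: o_def)
    moreover have "(\<lambda>j. Gn p b (r j) \<mu>) = (\<lambda>j. Gn p b (r j) 1 * (\<integral> t. K \<mu> t \<partial>(Pm p b \<circ> r) j))"
    proof (rule ext)
      fix j
      show "Gn p b (r j) \<mu> = Gn p b (r j) 1 * (\<integral> t. K \<mu> t \<partial>(Pm p b \<circ> r) j)"
        using Gn_eq_int[where b=b and p=p and n="r j" and \<mu>=\<mu>, OF b_pos] mu by (simp add: o_def)
    qed
    ultimately show ?thesis using LIMSEQ_unique[OF _ 2] by simp
  qed
  then show ?thesis using that M by blast
qed


definition phi :: "real \<Rightarrow> real" where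
  "phi t = (if t \<in> {0<..<1} then - ln (1 - t) else 1)"

definition Lam :: "real measure \<Rightarrow> real \<Rightarrow> real measure" where
  "Lam M c = density (distr (density M (\<lambda>t. ennreal (indicator {0<..<1} t)))
       (restrict_space borel {0<..}) phi) (\<lambda>u. ennreal (c / (1 - exp (- u))))"

lemma phi_meas: "phi \<in> borel \<rightarrow>\<^sub>M restrict_space borel {0<..}"
proof (rule measurable_restrict_space2)
  show "phi \<in> space borel \<rightarrow> {0<..}" by (auto simp: phi_def)
  show "phi \<in> borel_measurable borel" unfolding phi_def[abs_def] by measurable
qed

lemma phi_borel[measurable]: "phi \<in> borel_measurable borel"
  unfolding phi_def[abs_def] by measurable

lemma phi_exp: "t \<in> {0<..<1} \<Longrightarrow> exp (- phi t) = 1 - t"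
  by (simp add: phi_def)

lemma Lam_space: "space (Lam M c) = {0<..}"
  by (simp add: Lam_def space_restrict_space)

lemma Lam_sets: "sets (Lam M c) = sets (restrict_space borel {0<..})"
  by (simp add: Lam_def)

lemma Lam_integral:
  assumes M: "sets M = sets borel" and c: "c \<ge> 0"
  shows "(\<integral> u. (1 - exp (- l * u)) \<partial>Lam M c) = c * (\<integral> t. indicator {0<..<1} t * K l t \<partial>M)"
proof -
  let ?P = "density M (\<lambda>t. ennreal (indicator {0<..<1} t))"
  let ?D = "distr ?P (restrict_space borel {0<..}) phi"
  have mphi: "phi \<in> ?P \<rightarrow>\<^sub>M restrict_space borel {0<..}"
    using phi_meas measurable_cong_sets[OF M refl] by (simp add: measurable_cong_sets[OF M refl])
  have "(\<integral> u. (1 - exp (- l * u)) \<partial>Lam M c) = (\<integral> u. (c / (1 - exp (- u))) * (1 - exp (- l * u)) \<partial>?D)"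
    unfolding Lam_def
    using c by (subst integral_density) (auto intro!: AE_I2 divide_nonneg_nonneg simp: space_restrict_space measurable_restrict_space1)
  also have "\<dots> = (\<integral> t. (c / (1 - exp (- phi t))) * (1 - exp (- l * phi t)) \<partial>?P)"
    by (subst integral_distr[OF mphi]) (auto simp: measurable_restrict_space1)
  also have "\<dots> = (\<integral> t. indicator {0<..<1} t * ((c / (1 - exp (- phi t))) * (1 - exp (- l * phi t))) \<partial>M)"
  proof -
    have m1: "(\<lambda>t. (c / (1 - exp (- phi t))) * (1 - exp (- l * phi t))) \<in> borel_measurable M"
      unfolding measurable_cong_sets[OF M refl] by measurable
    have m2: "(\<lambda>t. indicator {0<..<1} t :: real) \<in> borel_measurable M"
      unfolding measurable_cong_sets[OF M refl] by measurable
    show ?thesis by (subst integral_density[OF m1 m2]) auto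
  qed
  also have "\<dots> = (\<integral> t. c * (indicator {0<..<1} t * K l t) \<partial>M)"
  proof (rule Bochner_Integration.integral_cong[OF refl])
    fix t
    show "indicator {0<..<1} t * ((c / (1 - exp (- phi t))) * (1 - exp (- l * phi t))) = c * (indicator {0<..<1} t * K l t)"
    proof (cases "t \<in> {0<..<1}")
      case True
      have "exp (- l * phi t) = (1 - t) powr l"
        using True by (simp add: phi_def powr_def)
      then show ?thesis using True by (simp add: phi_exp K_def)
    qed simp
  qed
  also have "\<dots> = c * (\<integral> t. indicator {0<..<1} t * K l t \<partial>M)"
    by (rule integral_mult_right_zero)
  finally show ?thesis .
qed


lemma min_ln_le:
  fixes t :: real
  assumes "0 < t" "t < 1"
  shows "min 1 (- ln (1 - t)) \<le> 2 * t"
proof (cases "t \<le> 1/2")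
  case True
  have "- t - 2 * t\<^sup>2 \<le> ln (1 - t)" using ln_one_minus_pos_lower_bound[of t] True assms by simp
  moreover have "t\<^sup>2 \<le> t / 2" using True assms by (simp add: power2_eq_square mult_left_le)
  ultimately show ?thesis by simp
next
  case False then show ?thesis by simp
qed

lemma Lam_sigma_finite:
  assumes M: "finite_measure M" "sets M = sets borel"
  shows "sigma_finite_measure (Lam M c)"
proof -
  interpret M: finite_measure M by fact
  let ?P = "density M (\<lambda>t. ennreal (indicator {0<..<1} t))"
  let ?D = "distr ?P (restrict_space borel {0<..}) phi"
  have mphi: "phi \<in> ?P \<rightarrow>\<^sub>M restrict_space borel {0<..}"
    using phi_meas by (simp add: measurable_cong_sets[OF M(2) refl])
  have A: "{0<..<1::real} \<in> sets M" using M(2) by simp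
  have "emeasure ?P (space ?P) = (\<integral>\<^sup>+ t. indicator {0<..<1} t \<partial>M)"
    by (subst emeasure_density) (auto simp: measurable_cong_sets[OF M(2) refl] ennreal_indicator)
  also have "\<dots> = emeasure M {0<..<1}" using A by (rule nn_integral_indicator)
  finally have "finite_measure ?P" by (intro finite_measureI) (simp add: M.emeasure_finite)
  then have "finite_measure ?D" using mphi by (rule finite_measure.finite_measure_distr)
  then interpret D: finite_measure ?D .
  show ?thesis unfolding Lam_def
    by (subst D.sigma_finite_iff_density_finite) (auto simp: measurable_restrict_space1)
qed

lemma Lam_nn:
  assumes M: "finite_measure M" "sets M = sets borel" and c: "c \<ge> 0"
  shows "(\<integral>\<^sup>+ u. ennreal (min 1 u) \<partial>Lam M c) < \<infinity>"
proof -
  interpret M: finite_measure M by fact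
  let ?P = "density M (\<lambda>t. ennreal (indicator {0<..<1} t))"
  let ?D = "distr ?P (restrict_space borel {0<..}) phi"
  have mphi: "phi \<in> ?P \<rightarrow>\<^sub>M restrict_space borel {0<..}"
    using phi_meas by (simp add: measurable_cong_sets[OF M(2) refl])
  have "(\<integral>\<^sup>+ u. ennreal (min 1 u) \<partial>Lam M c) = (\<integral>\<^sup>+ u. ennreal (c / (1 - exp (- u))) * ennreal (min 1 u) \<partial>?D)"
    unfolding Lam_def by (subst nn_integral_density) (auto simp: measurable_restrict_space1)
  also have "\<dots> = (\<integral>\<^sup>+ t. ennreal (c / (1 - exp (- phi t))) * ennreal (min 1 (phi t)) \<partial>?P)"
    by (subst nn_integral_distr[OF mphi]) (auto simp: measurable_restrict_space1)
  also have "\<dots> = (\<integral>\<^sup>+ t. ennreal (indicator {0<..<1} t) * (ennreal (c / (1 - exp (- phi t))) * ennreal (min 1 (phi t))) \<partial>M)"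
  proof -
    have m1: "(\<lambda>t. ennreal (c / (1 - exp (- phi t))) * ennreal (min 1 (phi t))) \<in> borel_measurable M"
      unfolding measurable_cong_sets[OF M(2) refl] by measurable
    have m2: "(\<lambda>t. ennreal (indicator {0<..<1} t)) \<in> borel_measurable M"
      unfolding measurable_cong_sets[OF M(2) refl] by measurable
    show ?thesis by (subst nn_integral_density[OF m2 m1]) auto
  qed
  also have "\<dots> \<le> (\<integral>\<^sup>+ t. ennreal (2 * c) \<partial>M)"
  proof (rule nn_integral_mono)
    fix t
    show "ennreal (indicator {0<..<1} t) * (ennreal (c / (1 - exp (- phi t))) * ennreal (min 1 (phi t))) \<le> ennreal (2 * c)"
    proof (cases "t \<in> {0<..<1}")
      case True
      then have t: "0 < t" "t < 1" by auto
      have "c / t * min 1 (- ln (1 - t)) \<le> c / t * (2 * t)"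
        using min_ln_le[OF t] c t by (intro mult_left_mono) auto
      also have "\<dots> = 2 * c" using t by simp
      finally have le: "c / t * min 1 (- ln (1 - t)) \<le> 2 * c" .
      have "ennreal (c / t) * ennreal (min 1 (- ln (1 - t))) = ennreal (c / t * min 1 (- ln (1 - t)))"
        using c t by (subst ennreal_mult) auto
      also have "\<dots> \<le> ennreal (2 * c)" using le by (rule ennreal_leI)
      finally show ?thesis using True by (simp add: phi_exp phi_def)
    qed simp
  qed
  also have "\<dots> = ennreal (2 * c) * emeasure M (space M)" by simp
  also have "\<dots> < \<infinity>"
  proof -
    have "emeasure M (space M) < \<top>" using M.finite_emeasure_space less_top by blast
    then show ?thesis by (simp add: ennreal_mult_less_top)
  qed
  finally show ?thesis .
qed


theorem lemma2p2:
  fixes p :: "nat \<Rightarrow> nat pmf" and b :: "nat \<Rightarrow> real" and F :: "real \<Rightarrow> real"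
  assumes b_pos: "\<And>n. b n > 0"
    and b_lim: "filterlim b at_top sequentially"
    and B_conv: "\<And>l. l \<ge> 0 \<Longrightarrow> (\<lambda>n. Fn p b n l) \<longlonglongrightarrow> F l"
    and B_cont: "continuous_on {0..} F"
  shows "\<exists>(d::real) (\<Lambda>::real measure).
           d \<ge> 0 \<and>
           space \<Lambda> = {0<..} \<and> sets \<Lambda> = sets (restrict_space borel {0<..}) \<and>
           sigma_finite_measure \<Lambda> \<and>
           (\<integral>\<^sup>+ u. ennreal (min 1 u) \<partial>\<Lambda>) < \<infinity> \<and>
           (\<forall>l\<ge>0. F l = d * l + (\<integral> u. (1 - exp (- l * u)) \<partial>\<Lambda>))"
proof -
  obtain M where M: "real_distribution M" and rep: "\<And>\<mu>. \<mu> > 0 \<Longrightarrow> F \<mu> = F 1 * (\<integral> t. K \<mu> t \<partial>M)"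
    using rep[OF b_pos b_lim B_conv B_cont] by blast
  interpret M: real_distribution M by fact
  define c where "c = F 1"
  have c0: "c \<ge> 0"
  proof -
    have "(\<lambda>n. Gn p b n 1) \<longlonglongrightarrow> F 1" using Gn_tendsto[OF b_pos b_lim B_conv B_cont] by simp
    moreover have "\<forall>n. 0 \<le> Gn p b n 1" using Gn_nonneg b_pos by (metis zero_le_one)
    ultimately show ?thesis unfolding c_def by (intro LIMSEQ_le_const) auto
  qed
  have F0: "F 0 = 0"
  proof -
    have "(\<lambda>n. Fn p b n 0) \<longlonglongrightarrow> F 0" using B_conv by simp
    then show ?thesis by (simp add: Fn_zero LIMSEQ_const_iff)
  qed
  define a0 where "a0 = measure M {..0}"
  define a1 where "a1 = measure M {1..}"
  define I where "I \<mu> = (\<integral> t. indicator {0<..<1} t * K \<mu> t \<partial>M)" for \<mu>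
  have intI: "integrable M (\<lambda>t. indicator {0<..<1} t * K \<mu> t)" if mu: "\<mu> > 0" for \<mu>
  proof -
    obtain B where B: "\<And>t. norm (K \<mu> t) \<le> B" using K_bounded[OF mu] by blast
    show ?thesis
    proof (rule M.integrable_const_bound[where B=B])
      show "AE x in M. norm (indicator {0<..<1} x * K \<mu> x) \<le> B"
        using B by (intro AE_I2) (auto simp: indicator_def order_trans[OF _ B])
    qed simp
  qed
  have dec: "(\<integral> t. K \<mu> t \<partial>M) = \<mu> * a0 + I \<mu> + a1" if mu: "\<mu> > 0" for \<mu>
  proof -
    have "(\<integral> t. K \<mu> t \<partial>M) = (\<integral> t. \<mu> * indicator {..0} t + indicator {0<..<1} t * K \<mu> t + indicator {1..} t \<partial>M)"
      by (subst K_split) simp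
    also have "\<dots> = (\<integral> t. \<mu> * indicator {..0} t \<partial>M) + I \<mu> + (\<integral> t. indicator {1..} t \<partial>M)"
    proof -
      have i1: "integrable M (\<lambda>t. \<mu> * indicator {..0} t)"
        by (rule M.integrable_const_bound[where B="\<bar>\<mu>\<bar>"]) (auto intro!: AE_I2 simp: indicator_def)
      have i3: "integrable M (\<lambda>t. indicator {1..} t :: real)"
        by (rule M.integrable_const_bound[where B=1]) (auto intro!: AE_I2 simp: indicator_def)
      have "(\<integral> t. \<mu> * indicator {..0} t + indicator {0<..<1} t * K \<mu> t + indicator {1..} t \<partial>M)
          = (\<integral> t. \<mu> * indicator {..0} t + indicator {0<..<1} t * K \<mu> t \<partial>M) + (\<integral> t. indicator {1..} t \<partial>M)"
        using i1 i3 intI[OF mu] by (intro Bochner_Integration.integral_add) auto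
      also have "(\<integral> t. \<mu> * indicator {..0} t + indicator {0<..<1} t * K \<mu> t \<partial>M)
          = (\<integral> t. \<mu> * indicator {..0} t \<partial>M) + I \<mu>"
        unfolding I_def using i1 intI[OF mu] by (intro Bochner_Integration.integral_add) auto
      finally show ?thesis .
    qed
    also have "\<dots> = \<mu> * a0 + I \<mu> + a1"
      by (simp add: a0_def a1_def)
    finally show ?thesis .
  qed
  have Fdec: "F \<mu> = c * (\<mu> * a0 + I \<mu> + a1)" if "\<mu> > 0" for \<mu>
    using rep[OF that] dec[OF that] by (simp add: c_def)
  define s where "s j = inverse (real (Suc j))" for j
  have s_pos: "s j > 0" for j by (simp add: s_def)
  have s_le: "s j \<le> 1" for j unfolding s_def by (simp add: inverse_le_1_iff)
  have s_lim: "s \<longlonglongrightarrow> 0" unfolding s_def by (rule LIMSEQ_inverse_real_of_nat)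
  have I_lim: "(\<lambda>j. I (s j)) \<longlonglongrightarrow> 0"
  proof -
    have "(\<lambda>j. \<integral> t. indicator {0<..<1} t * K (s j) t \<partial>M) \<longlonglongrightarrow> (\<integral> t. 0 \<partial>M)"
    proof (rule integral_dominated_convergence[where w="\<lambda>_. 1"])
      show "AE t in M. (\<lambda>j. indicator {0<..<1} t * K (s j) t) \<longlonglongrightarrow> 0"
      proof (rule AE_I2)
        fix t
        show "(\<lambda>j. indicator {0<..<1} t * K (s j) t) \<longlonglongrightarrow> 0"
        proof (cases "t \<in> {0<..<1}")
          case True
          have "(\<lambda>j. (1 - (1 - t) powr s j) / t) \<longlonglongrightarrow> (1 - (1 - t) powr 0) / t"
            using True by (intro tendsto_intros s_lim) auto
          then have "(\<lambda>j. (1 - (1 - t) powr s j) / t) \<longlonglongrightarrow> 0" using True by simp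
          then show ?thesis using True by (simp add: K_def)
        qed simp
      qed
      show "AE t in M. norm (indicator {0<..<1} t * K (s j) t) \<le> 1" for j
        using K_le1[OF s_pos s_le] by (intro AE_I2) (auto simp: indicator_def)
    qed auto
    then show ?thesis by (simp add: I_def)
  qed
  have ca1: "c * a1 = 0"
  proof -
    have "(\<lambda>j. F (s j)) \<longlonglongrightarrow> F 0"
      using s_lim s_pos by (intro continuous_on_tendsto_compose[OF B_cont]) (auto intro!: always_eventually less_imp_le)
    moreover have "(\<lambda>j. F (s j)) = (\<lambda>j. c * (s j * a0 + I (s j) + a1))"
      using Fdec s_pos by auto
    moreover have "(\<lambda>j. c * (s j * a0 + I (s j) + a1)) \<longlonglongrightarrow> c * (0 * a0 + 0 + a1)"
      by (intro tendsto_intros s_lim I_lim)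
    ultimately have "F 0 = c * (0 * a0 + 0 + a1)" using LIMSEQ_unique by metis
    then show ?thesis using F0 by simp
  qed
  have I0: "I 0 = 0"
  proof -
    have "(\<lambda>t. indicator {0<..<1} t * K 0 t) = (\<lambda>t. 0 :: real)"
      by (auto simp: K_def indicator_def)
    then show ?thesis by (simp add: I_def)
  qed
  define d where "d = c * a0"
  have d0: "d \<ge> 0" using c0 by (simp add: d_def a0_def)
  have Fl: "F l = d * l + c * I l" if "l \<ge> 0" for l
  proof (cases "l = 0")
    case True then show ?thesis by (simp add: F0 I0)
  next
    case False
    then have "l > 0" using that by simp
    from Fdec[OF this] ca1 show ?thesis by (simp add: d_def algebra_simps)
  qed
  have sM: "sets M = sets borel" by simp
  have fM: "finite_measure M" by (rule M.finite_measure_axioms)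
  show ?thesis
  proof (intro exI conjI allI impI)
    show "d \<ge> 0" by (rule d0)
    show "space (Lam M c) = {0<..}" by (rule Lam_space)
    show "sets (Lam M c) = sets (restrict_space borel {0<..})" by (rule Lam_sets)
    show "sigma_finite_measure (Lam M c)" by (rule Lam_sigma_finite[OF fM sM])
    show "(\<integral>\<^sup>+ u. ennreal (min 1 u) \<partial>Lam M c) < \<infinity>" by (rule Lam_nn[OF fM sM c0])
    fix l :: real assume l: "l \<ge> 0"
    show "F l = d * l + (\<integral> u. (1 - exp (- l * u)) \<partial>Lam M c)"
      using Fl[OF l] Lam_integral[OF sM c0, of l] by (simp add: I_def)
  qed
qed

end
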